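(* Let $Q^n$ and $Q^{n-1}$ be matrix-valued grid functions satisfying the boundary conditions whose values are symmetric and trace-free, and let $r^n$ be a real grid function. Suppose that $Q^{n+1}$ (a grid function of real $3\times3$ matrices satisfying the boundary conditions) and $r^{n+1}$ (a real grid function) satisfy, for all $(i,j,k)\in\{1,\dots,N\}^3$, $\frac{Q^{n+1}_{ijk}-Q^n_{ijk}}{\Delta t}=M\Big(L_1\Delta_hQ^{n+\frac12}_{ijk}-r^{n+\frac12}_{ijk}\overline P^{n+\frac12}_{ijk}+\frac{L_2+L_3}{2}\cdot\frac{\alpha_h(Q^{n+1})_{ijk}+\alpha_h(Q^n)_{ijk}}{2}\Big)$ and $r^{n+1}_{ijk}-r^n_{ijk}=\overline P^{n+\frac12}_{ijk}:(Q^{n+1}_{ijk}-Q^n_{ijk})$, where $f^{n+\frac12}=\frac12(f^{n+1}+f^n)$ and $\overline P^{n+\frac12}_{ijk}=\frac32P(Q^n_{ijk})-\frac12P(Q^{n-1}_{ijk})$. Then $Q^{n+1}_{ijk}$ is symmetric and trace-free for all $(i,j,k)$.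
   Context: Parameters: $a,b\in\mathbb{R}$, $c,L_1,L_2,L_3,M>0$, $\Delta t>0$, and $A_0>0$ such that $\inf\{\frac a2\operatorname{tr}(Q^2)-\frac b3\operatorname{tr}(Q^3)+\frac c4(\operatorname{tr}(Q^2))^2+A_0:\ Q\in\mathbb{R}^{3\times3}\text{ symmetric}\}>0$. For symmetric $Q$ let $r(Q)=\sqrt{2(\frac a2\operatorname{tr}(Q^2)-\frac b3\operatorname{tr}(Q^3)+\frac c4(\operatorname{tr}(Q^2))^2+A_0)}$, $S(Q)=aQ-b(Q^2-\frac13\operatorname{tr}(Q^2)I)+c\operatorname{tr}(Q^2)Q$, $P(Q)=S(Q)/r(Q)$; $A:B=\sum_{i,j}A_{ij}B_{ij}$. Grid: $N\in\mathbb{N}$, $h=1/(N+1)$. Grid functions are families $(f_{ijk})_{(i,j,k)\in\mathbb{Z}^3}$ of scalars or real $3\times3$ matrices; the boundary conditions mean $f_{ijk}=0$ whenever $(i,j,k)\notin\{1,\dots,N\}^3$. $D^\pm_1f_{ijk}=\pm(f_{i\pm1,j,k}-f_{ijk})/h$, $D^c_1f_{ijk}=(f_{i+1,j,k}-f_{i-1,j,k})/(2h)$, and analogously $D^\pm_2,D^c_2$ (shift in $j$), $D^\pm_3,D^c_3$ (shift in $k$). $\Delta_hf=\sum_{\alpha=1}^3D^-_\alpha D^+_\alpha f$, $\alpha_h(Q)_{ws}=\sum_{\beta=1}^3[D^c_wD^c_\beta Q_{s\beta}+D^c_sD^c_\beta Q_{w\beta}]-\frac23\sum_{\beta,\gamma=1}^3D^c_\beta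 D^c_\gamma Q_{\beta\gamma}\delta_{ws}$. *)

theory Defs
  imports "HOL-Analysis.Analysis"
begin

type_synonym mat3 = "real^3^3"
type_synonym gridpt = "int \<times> int \<times> int"

definition bulk :: "real \<Rightarrow> real \<Rightarrow> real \<Rightarrow> real \<Rightarrow> mat3 \<Rightarrow> real" where
  "bulk a b c A0 Q = a/2 * trace (Q ** Q) - b/3 * trace (Q ** Q ** Q)
     + c/4 * (trace (Q ** Q))^2 + A0"

definition rfun :: "real \<Rightarrow> real \<Rightarrow> real \<Rightarrow> real \<Rightarrow> mat3 \<Rightarrow> real" where
  "rfun a b c A0 Q = sqrt (2 * bulk a b c A0 Q)"

definition Sfun :: "real \<Rightarrow> real \<Rightarrow> real \<Rightarrow> mat3 \<Rightarrow> mat3" where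
  "Sfun a b c Q = a *\<^sub>R Q - b *\<^sub>R (Q ** Q - (trace (Q ** Q) / 3) *\<^sub>R mat 1)
     + (c * trace (Q ** Q)) *\<^sub>R Q"

definition Pfun :: "real \<Rightarrow> real \<Rightarrow> real \<Rightarrow> real \<Rightarrow> mat3 \<Rightarrow> mat3" where
  "Pfun a b c A0 Q = (1 / rfun a b c A0 Q) *\<^sub>R Sfun a b c Q"

definition frob :: "mat3 \<Rightarrow> mat3 \<Rightarrow> real" where
  "frob A B = (\<Sum>i\<in>UNIV. \<Sum>j\<in>UNIV. A $ i $ j * B $ i $ j)"

definition symmetric_mat :: "mat3 \<Rightarrow> bool" where
  "symmetric_mat Q \<longleftrightarrow> transpose Q = Q"

definition grid_interior :: "nat \<Rightarrow> gridpt \<Rightarrow> bool" where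
  "grid_interior N p \<longleftrightarrow> (case p of (i, j, k) \<Rightarrow>
     1 \<le> i \<and> i \<le> int N \<and> 1 \<le> j \<and> j \<le> int N \<and> 1 \<le> k \<and> k \<le> int N)"

definition bc :: "nat \<Rightarrow> (gridpt \<Rightarrow> 'a::zero) \<Rightarrow> bool" where
  "bc N f \<longleftrightarrow> (\<forall>p. \<not> grid_interior N p \<longrightarrow> f p = 0)"

definition shift :: "3 \<Rightarrow> int \<Rightarrow> gridpt \<Rightarrow> gridpt" where
  "shift d s p = (case p of (i, j, k) \<Rightarrow>
     if d = 1 then (i + s, j, k) else if d = 2 then (i, j + s, k) else (i, j, k + s))"

definition Dp :: "real \<Rightarrow> 3 \<Rightarrow> (gridpt \<Rightarrow> 'a::real_vector) \<Rightarrow> gridpt \<Rightarrow> 'a" where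
  "Dp h d f p = (1 / h) *\<^sub>R (f (shift d 1 p) - f p)"

definition Dm :: "real \<Rightarrow> 3 \<Rightarrow> (gridpt \<Rightarrow> 'a::real_vector) \<Rightarrow> gridpt \<Rightarrow> 'a" where
  "Dm h d f p = (1 / h) *\<^sub>R (f p - f (shift d (-1) p))"

definition Dc :: "real \<Rightarrow> 3 \<Rightarrow> (gridpt \<Rightarrow> 'a::real_vector) \<Rightarrow> gridpt \<Rightarrow> 'a" where
  "Dc h d f p = (1 / (2 * h)) *\<^sub>R (f (shift d 1 p) - f (shift d (-1) p))"

definition lap_h :: "real \<Rightarrow> (gridpt \<Rightarrow> 'a::real_vector) \<Rightarrow> gridpt \<Rightarrow> 'a" where
  "lap_h h f p = (\<Sum>d\<in>UNIV. Dm h d (Dp h d f) p)"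

definition alpha_h :: "real \<Rightarrow> (gridpt \<Rightarrow> mat3) \<Rightarrow> gridpt \<Rightarrow> mat3" where
  "alpha_h h Q p = (\<chi> w s.
      (\<Sum>\<beta>\<in>UNIV. Dc h w (Dc h \<beta> (\<lambda>q. Q q $ s $ \<beta>)) p
                 + Dc h s (Dc h \<beta> (\<lambda>q. Q q $ w $ \<beta>)) p)
      - 2/3 * (\<Sum>\<beta>\<in>UNIV. \<Sum>\<gamma>\<in>UNIV. Dc h \<beta> (Dc h \<gamma> (\<lambda>q. Q q $ \<beta> $ \<gamma>)) p)
            * (if w = s then 1 else 0))"

definition hstep :: "nat \<Rightarrow> real" where
  "hstep N = 1 / (real N + 1)"

end

theory Submission
  imports Defs
begin

lemma lap_lin:
  assumes "linear l"
  shows "l (lap_h h f p) = lap_h h (\<lambda>q. l (f q)) p"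
  unfolding lap_h_def Dm_def Dp_def
  by (simp add: linear_sum[OF assms] linear_scale[OF assms] linear_diff[OF assms])

lemma shift_shift: "shift d s (shift d t p) = shift d (s + t) p"
  by (cases p) (auto simp: shift_def add.assoc)

lemma shift0: "shift d 0 p = p"
  by (cases p) (auto simp: shift_def)

lemma finite_interior: "finite {p. grid_interior N p}"
proof -
  have "{p. grid_interior N p} \<subseteq> {1..int N} \<times> {1..int N} \<times> {1..int N}"
    by (auto simp: grid_interior_def)
  then show ?thesis by (rule finite_subset) auto
qed

lemma maxp:
  fixes u :: "gridpt \<Rightarrow> real"
  assumes bcu: "bc N u" and dt: "dt > 0" and k: "\<kappa> \<ge> 0"
    and eq: "\<And>p. grid_interior N p \<Longrightarrow> u p / dt = \<kappa> * lap_h h u p"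
  shows "u p0 \<le> 0"
proof (rule ccontr)
  assume "\<not> u p0 \<le> 0"
  hence pos: "u p0 > 0" by simp
  let ?S = "{p. grid_interior N p}"
  have p0S: "p0 \<in> ?S" using pos bcu unfolding bc_def by (metis less_irrefl mem_Collect_eq)
  have fin: "finite (u ` ?S)" using finite_interior by simp
  have ne: "u ` ?S \<noteq> {}" using p0S by blast
  obtain m where mS: "m \<in> ?S" and mmax: "u m = Max (u ` ?S)"
    using Max_in[OF fin ne] by auto
  have ge: "u q \<le> u m" if "q \<in> ?S" for q
    using Max_ge[OF fin] that mmax by auto
  have um: "u m > 0" using ge[OF p0S] pos by simp
  have all: "u q \<le> u m" for q
  proof (cases "q \<in> ?S")
    case True then show ?thesis using ge by simp
  next
    case False then have "u q = 0" using bcu unfolding bc_def by blast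
    then show ?thesis using um by simp
  qed
  have trm: "Dm h d (Dp h d u) m \<le> 0" for d
  proof -
    have e: "Dm h d (Dp h d u) m = ((u (shift d 1 m) - u m) - (u m - u (shift d (-1) m))) / (h * h)"
      unfolding Dm_def Dp_def by (cases "h = 0") (simp_all add: shift_shift shift0 field_simps)
    have "(u (shift d 1 m) - u m) - (u m - u (shift d (-1) m)) \<le> 0"
      using all[of "shift d 1 m"] all[of "shift d (-1) m"] by simp
    moreover have "h * h \<ge> 0" by simp
    ultimately show ?thesis unfolding e by (simp add: divide_nonpos_nonneg)
  qed
  have "lap_h h u m \<le> 0" unfolding lap_h_def by (rule sum_nonpos) (use trm in auto)
  hence "\<kappa> * lap_h h u m \<le> 0" using k by (simp add: mult_nonneg_nonpos)
  moreover have "u m / dt > 0" using um dt by simp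
  ultimately show False using eq[of m] mS by simp
qed

lemma maxp0:
  fixes u :: "gridpt \<Rightarrow> real"
  assumes bcu: "bc N u" and dt: "dt > 0" and k: "\<kappa> \<ge> 0"
    and eq: "\<And>p. grid_interior N p \<Longrightarrow> u p / dt = \<kappa> * lap_h h u p"
  shows "u p0 = 0"
proof -
  have "u p0 \<le> 0" by (rule maxp[OF bcu dt k eq])
  moreover have "(\<lambda>q. - u q) p0 \<le> 0"
  proof (rule maxp[OF _ dt k])
    show "bc N (\<lambda>q. - u q)" using bcu by (simp add: bc_def)
    fix p assume "grid_interior N p"
    moreover have "lap_h h (\<lambda>q. - u q) p = - lap_h h u p"
      unfolding lap_h_def Dm_def Dp_def by (simp add: sum_negf[symmetric] algebra_simps)
    ultimately show "- u p / dt = \<kappa> * lap_h h (\<lambda>q. - u q) p" using eq[of p] by simp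
  qed
  ultimately show ?thesis by simp
qed


lemma key:
  fixes l :: "mat3 \<Rightarrow> real" and Qn Qnp1 Pb :: "gridpt \<Rightarrow> mat3"
  assumes lin: "linear l"
    and hQn: "\<And>q. l (Qn q) = 0"
    and hP: "\<And>q. grid_interior N q \<Longrightarrow> l (Pb q) = 0"
    and hA: "\<And>Q q. l (alpha_h h Q q) = 0"
    and bcQ: "bc N Qnp1" and M: "M > 0" and L1: "L1 > 0" and dt: "dt > 0"
    and eq: "\<And>p. grid_interior N p \<Longrightarrow> (1/dt) *\<^sub>R (Qnp1 p - Qn p) =
      M *\<^sub>R (L1 *\<^sub>R lap_h h (\<lambda>q. (1/2) *\<^sub>R (Qnp1 q + Qn q)) p
        - \<rho> p *\<^sub>R Pb p + K *\<^sub>R ((1/2) *\<^sub>R (alpha_h h Qnp1 p + alpha_h h Qn p)))"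
  shows "l (Qnp1 p0) = 0"
proof -
  let ?u = "\<lambda>q. l (Qnp1 q)"
  note ls = linear_scale[OF lin] linear_diff[OF lin] linear_add[OF lin] linear_0[OF lin]
  show ?thesis
  proof (rule maxp0[where \<kappa> = "M * L1 / 2" and dt = dt and N = N and h = h])
    show "bc N ?u" using bcQ by (simp add: bc_def ls)
    show "dt > 0" by fact
    show "0 \<le> M * L1 / 2" using M L1 by simp
    fix p assume ip: "grid_interior N p"
    have "?u p / dt = l ((1/dt) *\<^sub>R (Qnp1 p - Qn p))"
      by (simp add: ls hQn)
    also have "\<dots> = l (M *\<^sub>R (L1 *\<^sub>R lap_h h (\<lambda>q. (1/2) *\<^sub>R (Qnp1 q + Qn q)) p
        - \<rho> p *\<^sub>R Pb p + K *\<^sub>R ((1/2) *\<^sub>R (alpha_h h Qnp1 p + alpha_h h Qn p))))"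
      by (simp only: eq[OF ip])
    also have "\<dots> = M * L1 * l (lap_h h (\<lambda>q. (1/2) *\<^sub>R (Qnp1 q + Qn q)) p)"
      by (simp add: ls hP[OF ip] hA)
    also have "l (lap_h h (\<lambda>q. (1/2) *\<^sub>R (Qnp1 q + Qn q)) p) = lap_h h (\<lambda>q. (1/2) * ?u q) p"
      by (simp add: lap_lin[OF lin] ls hQn)
    also have "lap_h h (\<lambda>q. (1/2) * ?u q) p = (1/2) * lap_h h ?u p"
      unfolding lap_h_def Dm_def Dp_def by (simp add: sum_distrib_left algebra_simps)
    finally show "?u p / dt = M * L1 / 2 * lap_h h ?u p" by simp
  qed
qed

lemma lin_anti: "linear (\<lambda>X::mat3. X $ i $ j - X $ j $ i)"
  by (rule linearI) (simp_all add: algebra_simps)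

lemma lin_trace: "linear (trace :: mat3 \<Rightarrow> real)"
  by (rule linearI) (simp_all add: trace_def sum.distrib sum_distrib_left)

lemma sym_ent: "symmetric_mat X \<Longrightarrow> X $ i $ j = X $ j $ i"
proof -
  assume "symmetric_mat X"
  hence "transpose X $ i $ j = X $ i $ j" unfolding symmetric_mat_def by simp
  thus ?thesis unfolding transpose_def vec_lambda_beta by simp
qed

lemma Sfun_sym:
  assumes "symmetric_mat Q"
  shows "Sfun a b c Q $ i $ j = Sfun a b c Q $ j $ i"
proof -
  have "(Q ** Q) $ i $ j = (Q ** Q) $ j $ i"
    unfolding matrix_matrix_mult_def
    by (simp add: sym_ent[OF assms, of i] sym_ent[OF assms, of j] mult.commute)
  then show ?thesis unfolding Sfun_def by (simp add: mat_def sym_ent[OF assms, of i j])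
qed

lemma Pfun_sym:
  assumes "symmetric_mat Q"
  shows "Pfun a b c A0 Q $ i $ j = Pfun a b c A0 Q $ j $ i"
  unfolding Pfun_def using Sfun_sym[OF assms] by simp

lemma Pfun_tr:
  assumes "trace Q = 0"
  shows "trace (Pfun a b c A0 Q) = 0"
proof -
  have "trace (Sfun a b c Q) = 0"
    unfolding Sfun_def using assms
    by (simp add: trace_add trace_sub linear_scale[OF lin_trace] trace_I)
  then show ?thesis unfolding Pfun_def by (simp add: linear_scale[OF lin_trace])
qed

lemma alpha_sym: "alpha_h h Q p $ i $ j = alpha_h h Q p $ j $ i"
  unfolding alpha_h_def by (simp add: add.commute eq_commute)

lemma alpha_tr: "trace (alpha_h h Q p) = 0"
  unfolding alpha_h_def trace_def by (simp add: sum.distrib sum_subtractf sum_distrib_left)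

theorem proposition4p4:
  fixes a b c L1 L2 L3 M dt A0 :: real
    and N :: nat
    and Qn Qnm1 Qnp1 :: "gridpt \<Rightarrow> mat3"
    and rn rnp1 :: "gridpt \<Rightarrow> real"
  assumes "0 < c" "0 < L1" "0 < L2" "0 < L3" "0 < M" "0 < dt" "0 < A0"
    and "(INF Q\<in>{Q. symmetric_mat Q}. bulk a b c A0 Q) > 0"
    and "bc N Qn" "bc N Qnm1"
    and "\<And>p. symmetric_mat (Qn p) \<and> trace (Qn p) = 0"
    and "\<And>p. symmetric_mat (Qnm1 p) \<and> trace (Qnm1 p) = 0"
    and "bc N Qnp1"
    and "\<And>p. grid_interior N p \<Longrightarrow>
      (1 / dt) *\<^sub>R (Qnp1 p - Qn p) =
        M *\<^sub>R (L1 *\<^sub>R lap_h (hstep N) (\<lambda>q. (1/2) *\<^sub>R (Qnp1 q + Qn q)) p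
          - ((rnp1 p + rn p) / 2) *\<^sub>R
              ((3/2) *\<^sub>R Pfun a b c A0 (Qn p) - (1/2) *\<^sub>R Pfun a b c A0 (Qnm1 p))
          + ((L2 + L3) / 2) *\<^sub>R
              ((1/2) *\<^sub>R (alpha_h (hstep N) Qnp1 p + alpha_h (hstep N) Qn p)))"
    and "\<And>p. grid_interior N p \<Longrightarrow>
      rnp1 p - rn p =
        frob ((3/2) *\<^sub>R Pfun a b c A0 (Qn p) - (1/2) *\<^sub>R Pfun a b c A0 (Qnm1 p))
             (Qnp1 p - Qn p)"
  shows "\<forall>p. symmetric_mat (Qnp1 p) \<and> trace (Qnp1 p) = 0"
proof (intro allI conjI)
  fix p0
  let ?Pb = "\<lambda>p. (3/2) *\<^sub>R Pfun a b c A0 (Qn p) - (1/2) *\<^sub>R Pfun a b c A0 (Qnm1 p)"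
  note E = assms(14)
  have symn: "symmetric_mat (Qn q)" "symmetric_mat (Qnm1 q)" "trace (Qn q) = 0" "trace (Qnm1 q) = 0" for q
    using assms(11) assms(12) by auto
  have anti: "Qnp1 p0 $ i $ j - Qnp1 p0 $ j $ i = 0" for i j
  proof (rule key[where l = "\<lambda>X. X $ i $ j - X $ j $ i" and Pb = ?Pb
        and \<rho> = "\<lambda>p. (rnp1 p + rn p) / 2" and K = "(L2 + L3) / 2" and h = "hstep N",
        OF lin_anti _ _ _ assms(13) assms(5) assms(2) assms(6) E])
    show "Qn q $ i $ j - Qn q $ j $ i = 0" for q using sym_ent[OF symn(1), of q i j] by linarith
    show "?Pb q $ i $ j - ?Pb q $ j $ i = 0" for q
    proof -
      have "Pfun a b c A0 (Qn q) $ i $ j = Pfun a b c A0 (Qn q) $ j $ i"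
        by (rule Pfun_sym[OF symn(1)])
      moreover have "Pfun a b c A0 (Qnm1 q) $ i $ j = Pfun a b c A0 (Qnm1 q) $ j $ i"
        by (rule Pfun_sym[OF symn(2)])
      ultimately show ?thesis by (simp only: vector_minus_component vector_scaleR_component)
    qed
    show "alpha_h (hstep N) Q q $ i $ j - alpha_h (hstep N) Q q $ j $ i = 0" for Q q
      using alpha_sym[of "hstep N" Q q i j] by linarith
  qed
  show "symmetric_mat (Qnp1 p0)"
    unfolding symmetric_mat_def vec_eq_iff
  proof (intro allI)
    fix i j
    have "Qnp1 p0 $ j $ i = Qnp1 p0 $ i $ j" using anti[of j i] by linarith
    then show "transpose (Qnp1 p0) $ i $ j = Qnp1 p0 $ i $ j"
      unfolding transpose_def vec_lambda_beta .
  qed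
  show "trace (Qnp1 p0) = 0"
  proof (rule key[where l = trace and Pb = ?Pb
        and \<rho> = "\<lambda>p. (rnp1 p + rn p) / 2" and K = "(L2 + L3) / 2" and h = "hstep N",
        OF lin_trace _ _ _ assms(13) assms(5) assms(2) assms(6) E])
    show "trace (Qn q) = 0" for q by (rule symn(3))
    show "trace (?Pb q) = 0" for q
      using Pfun_tr[OF symn(3)] Pfun_tr[OF symn(4)] by (simp add: trace_sub linear_scale[OF lin_trace])
    show "trace (alpha_h (hstep N) Q q) = 0" for Q q by (rule alpha_tr)
  qed
qed

end
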